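(* Let $m\in\mathbb N$ and $\lambda\in X^+_{m+\infty}$, and let $\lambda^\natural\in X^+_{m|\infty}$ be as defined below. Then: (1) the degree of J-atypicality of $\lambda$ equals the degree of atypicality of $\lambda^\natural$; (2) $\lambda$ is J-typical if and only if $\lambda^\natural$ is typical.
   Context: $I(m|\infty)=\{-m,\dots,-1\}\cup\{1,2,\dots\}$. $X^+_{m+\infty}$ is the set of $\lambda=\sum_{i\in I(m|\infty)}\lambda_i\delta'_i$, $\lambda_i\in\mathbb Z$, with $\lambda_{-m}\ge\cdots\ge\lambda_{-1}$, $\lambda_1\ge\lambda_2\ge\cdots$ and $\lambda_i=0$ for $i\gg0$ (so $(\lambda_1,\lambda_2,\dots)$ is a partition); $X^+_{m|\infty}$ is defined likewise with symbols $\delta_i$. For $\lambda\in X^+_{m+\infty}$, let $(\lambda'_1,\lambda'_2,\dots)$ be the conjugate partition of $(\lambda_1,\lambda_2,\dots)$ and $\lambda^\natural=\sum_{i=-m}^{-1}\lambda_i\delta_i+\sum_{j\ge1}\lambda'_j\delta_j$. Super side: $(\delta_i|\delta_j)=-\mathrm{sgn}(i)\delta_{ij}$, $\rho=-\sum_i i\delta_i$. The degree of atypicality of $\mu\in X^+_{m|\infty}$ is the number of $i\in\{-m,\dots,-1\}$ such that $(\mu+\rho|\delta_i-\delta_j)=0$ for some $j>0$; $\mu$ is typical if it is $0$. Reductive side: $(\delta'_i|\delta'_j)_c=\delta_{ij}$, $\rho_c=-\sum_{i<0}i\delta'_i+\sum_{j>0}(1-j)\delta'_j$, and $f_\lambda:I(m|\infty)\to\mathbb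 Z$, $f_\lambda(i)=(\lambda+\rho_c|\delta'_i)_c$. For $f:I(m|\infty)\to\mathbb Z$ injective on negative indices and on positive indices, a pair $(i|j)$ with $i<0<j$ is an atypical pair if $f(i)>f(j)$, $f(i)\ne f(k)$ for all $k>0$ and $f(l)\ne f(j)$ for all $l<0$; its distance is $f(i)-f(j)$. Two pairs are disjoint if they share neither first nor second entry. Recursively for $k\ge1$ let $\Sigma^k_f$ be the set of atypical pairs of distance $k$ disjoint from all pairs in $\Sigma^1_f\cup\cdots\cup\Sigma^{k-1}_f$, and $\Sigma^+_f=\bigcup_k\Sigma^k_f$. The degree of J-atypicality of $\lambda$ is $|\Sigma^+_{f_\lambda}|$. The Bruhat ordering on functions $I(m|\infty)\to\mathbb Z$ is the transitive closure of $f<f\cdot\tau_{ij}$ for $i<j$ with $f(i)<f(j)$ ($(f\cdot\tau)(k)=f(\tau(k))$, $\tau_{ij}$ a transposition); $\lambda$ is J-typical if $f_\lambda$ is minimal in this ordering among $\{f_\mu:\mu\in X^+_{m+\infty}\}$. *)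

theory Defs
  imports Main
begin

text \<open>Weights are represented by their coefficient functions int => int
  (coefficient of delta'_i resp. delta_i); coefficients outside the index set are 0.\<close>

definition idx :: "nat \<Rightarrow> int set" where
  "idx m = {i. - int m \<le> i \<and> i \<le> -1} \<union> {i. 1 \<le> i}"

definition Xplus_red :: "nat \<Rightarrow> (int \<Rightarrow> int) set" where
  "Xplus_red m = {lam.
      (\<forall>i. i \<notin> idx m \<longrightarrow> lam i = 0) \<and>
      (\<forall>i. - int m \<le> i \<and> i < -1 \<longrightarrow> lam i \<ge> lam (i + 1)) \<and>
      (\<forall>i. 1 \<le> i \<longrightarrow> lam i \<ge> lam (i + 1)) \<and>
      (\<exists>N. \<forall>i\<ge>N. lam i = 0)}"

definition Xplus_super :: "nat \<Rightarrow> (int \<Rightarrow> int) set" where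
  "Xplus_super m = {mu.
      (\<forall>i. i \<notin> idx m \<longrightarrow> mu i = 0) \<and>
      (\<forall>i. - int m \<le> i \<and> i < -1 \<longrightarrow> mu i \<ge> mu (i + 1)) \<and>
      (\<forall>i. 1 \<le> i \<longrightarrow> mu i \<ge> mu (i + 1)) \<and>
      (\<exists>N. \<forall>i\<ge>N. mu i = 0)}"

text \<open>lambda-natural: negative part unchanged, positive part replaced by the conjugate partition.\<close>
definition natural :: "nat \<Rightarrow> (int \<Rightarrow> int) \<Rightarrow> (int \<Rightarrow> int)" where
  "natural m lam = (\<lambda>i. if - int m \<le> i \<and> i \<le> -1 then lam i
                        else if 1 \<le> i then int (card {k::nat. 1 \<le> k \<and> lam (int k) \<ge> i})
                        else 0)"

definition rho_super :: "int \<Rightarrow> int" where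
  "rho_super i = - i"

text \<open>(v | delta_k) for (delta_i|delta_j) = -sgn(i) delta_ij.\<close>
definition pair_super :: "(int \<Rightarrow> int) \<Rightarrow> int \<Rightarrow> int" where
  "pair_super v k = - sgn k * v k"

definition atyp_degree :: "nat \<Rightarrow> (int \<Rightarrow> int) \<Rightarrow> nat" where
  "atyp_degree m mu = card {i. - int m \<le> i \<and> i \<le> -1 \<and>
      (\<exists>j>0. pair_super (\<lambda>k. mu k + rho_super k) i
             - pair_super (\<lambda>k. mu k + rho_super k) j = 0)}"

definition typical :: "nat \<Rightarrow> (int \<Rightarrow> int) \<Rightarrow> bool" where
  "typical m mu \<longleftrightarrow> atyp_degree m mu = 0"

definition rho_c :: "int \<Rightarrow> int" where
  "rho_c i = (if i < 0 then - i else 1 - i)"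

definition f_lam :: "nat \<Rightarrow> (int \<Rightarrow> int) \<Rightarrow> (int \<Rightarrow> int)" where
  "f_lam m lam = (\<lambda>i. if i \<in> idx m then lam i + rho_c i else 0)"

definition atyp_pair :: "nat \<Rightarrow> (int \<Rightarrow> int) \<Rightarrow> int \<times> int \<Rightarrow> bool" where
  "atyp_pair m f p \<longleftrightarrow> (case p of (i, j) \<Rightarrow>
      - int m \<le> i \<and> i < 0 \<and> 0 < j \<and> f i > f j \<and>
      (\<forall>k>0. f i \<noteq> f k) \<and> (\<forall>l. - int m \<le> l \<and> l < 0 \<longrightarrow> f l \<noteq> f j))"

definition pair_dist :: "(int \<Rightarrow> int) \<Rightarrow> int \<times> int \<Rightarrow> int" where
  "pair_dist f p = f (fst p) - f (snd p)"

definition disjoint_pairs :: "int \<times> int \<Rightarrow> int \<times> int \<Rightarrow> bool" where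
  "disjoint_pairs p q \<longleftrightarrow> fst p \<noteq> fst q \<and> snd p \<noteq> snd q"

fun sigma_upto :: "nat \<Rightarrow> (int \<Rightarrow> int) \<Rightarrow> nat \<Rightarrow> (int \<times> int) set" where
  "sigma_upto m f 0 = {}"
| "sigma_upto m f (Suc k) = sigma_upto m f k \<union>
     {p. atyp_pair m f p \<and> pair_dist f p = int (Suc k) \<and>
         (\<forall>q \<in> sigma_upto m f k. disjoint_pairs p q)}"

definition sigma_plus :: "nat \<Rightarrow> (int \<Rightarrow> int) \<Rightarrow> (int \<times> int) set" where
  "sigma_plus m f = (\<Union>k. sigma_upto m f k)"

definition J_atyp_degree :: "nat \<Rightarrow> (int \<Rightarrow> int) \<Rightarrow> nat" where
  "J_atyp_degree m lam = card (sigma_plus m (f_lam m lam))"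

definition bruhat_step :: "nat \<Rightarrow> (int \<Rightarrow> int) \<Rightarrow> (int \<Rightarrow> int) \<Rightarrow> bool" where
  "bruhat_step m f g \<longleftrightarrow> (\<exists>i j. i \<in> idx m \<and> j \<in> idx m \<and> i < j \<and> f i < f j \<and>
      g = (\<lambda>k. f (if k = i then j else if k = j then i else k)))"

definition bruhat_less :: "nat \<Rightarrow> (int \<Rightarrow> int) \<Rightarrow> (int \<Rightarrow> int) \<Rightarrow> bool" where
  "bruhat_less m = tranclp (bruhat_step m)"

definition J_typical :: "nat \<Rightarrow> (int \<Rightarrow> int) \<Rightarrow> bool" where
  "J_typical m lam \<longleftrightarrow> \<not> (\<exists>mu \<in> Xplus_red m. bruhat_less m (f_lam m mu) (f_lam m lam))"

end

theory Submission
  imports Defs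
begin


lemma dec_chain:
  fixes h :: "int \<Rightarrow> int"
  assumes step: "\<And>x. a \<le> x \<Longrightarrow> x < b \<Longrightarrow> h (x+1) < h x"
    and "a \<le> x" "x < y" "y \<le> b"
  shows "h y < h x"
proof -
  obtain n :: nat where y: "y = x + int n + 1" using \<open>x < y\<close>
  proof -
    have "y = x + int (nat (y - x - 1)) + 1" using \<open>x < y\<close> by simp
    then show ?thesis using that by blast
  qed
  have "\<And>n::nat. x + int n + 1 \<le> b \<Longrightarrow> h (x + int n + 1) < h x"
  proof -
    fix n :: nat
    show "x + int n + 1 \<le> b \<Longrightarrow> h (x + int n + 1) < h x"
    proof (induction n)
      case 0
      then show ?case using step[of x] \<open>a \<le> x\<close> by simp
    next
      case (Suc n)
      have "h (x + int n + 1 + 1) < h (x + int n + 1)"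
        using step[of "x + int n + 1"] Suc.prems \<open>a \<le> x\<close> by simp
      moreover have "x + int n + 1 \<le> b" using Suc.prems by simp
      moreover have "x + int (Suc n) + 1 = x + int n + 1 + 1" by simp
      ultimately show ?case using Suc.IH by (metis order.strict_trans)
    qed
  qed
  then show ?thesis using y \<open>y \<le> b\<close> by blast
qed

lemma Xr_D:
  assumes "lam \<in> Xplus_red m"
  shows "\<And>i. i \<notin> idx m \<Longrightarrow> lam i = 0"
    and "\<And>i. - int m \<le> i \<Longrightarrow> i < -1 \<Longrightarrow> lam (i+1) \<le> lam i"
    and "\<And>i. 1 \<le> i \<Longrightarrow> lam (i+1) \<le> lam i"
    and "\<exists>N. \<forall>i\<ge>N. lam i = 0"
  using assms unfolding Xplus_red_def by auto

lemma lam_mono':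
  assumes "lam \<in> Xplus_red m" "1 \<le> x" "x \<le> y"
  shows "lam y \<le> lam x"
proof -
  have "\<forall>n::nat. lam (x + int n) \<le> lam x"
  proof
    fix n :: nat show "lam (x + int n) \<le> lam x"
    proof (induction n)
      case (Suc n)
      have "lam (x + int n + 1) \<le> lam (x + int n)" using Xr_D(3)[OF assms(1), of "x + int n"] assms(2) by simp
      moreover have "x + int (Suc n) = x + int n + 1" by simp
      ultimately show ?case using Suc.IH by (metis order_trans)
    qed simp
  qed
  then show ?thesis using assms(3) by (metis zle_iff_zadd)
qed

lemma lam_nonneg:
  assumes "lam \<in> Xplus_red m" "1 \<le> x"
  shows "0 \<le> lam x"
proof -
  obtain N where N: "\<forall>i\<ge>N. lam i = 0" using Xr_D(4)[OF assms(1)] by blast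
  have "lam (max x N) \<le> lam x" using lam_mono'[OF assms(1) assms(2)] by simp
  then show ?thesis using N by simp
qed




lemma idx_iff: "x \<in> idx m \<longleftrightarrow> (- int m \<le> x \<and> x \<le> -1) \<or> 1 \<le> x"
  unfolding idx_def by auto

lemma F_P: "1 \<le> x \<Longrightarrow> f_lam m lam x = lam x + 1 - x"
  unfolding f_lam_def rho_c_def idx_iff by auto

lemma F_N: "- int m \<le> x \<Longrightarrow> x \<le> -1 \<Longrightarrow> f_lam m lam x = lam x - x"
  unfolding f_lam_def rho_c_def idx_iff by auto

lemma F_out: "x \<notin> idx m \<Longrightarrow> f_lam m lam x = 0"
  unfolding f_lam_def by auto

context
  fixes m lam
  assumes V: "lam \<in> Xplus_red m"
begin

lemma F_decP: "1 \<le> x \<Longrightarrow> x < y \<Longrightarrow> f_lam m lam y < f_lam m lam x"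
  apply (rule dec_chain[of 1 y _ x y])
  using Xr_D(3)[OF V] F_P by auto

lemma F_decN: "- int m \<le> x \<Longrightarrow> x < y \<Longrightarrow> y \<le> -1 \<Longrightarrow> f_lam m lam y < f_lam m lam x"
  apply (rule dec_chain[of "- int m" "-1" _ x y])
  using Xr_D(2)[OF V] F_N by (auto, smt (verit))

lemma F_ltP_iff: "1 \<le> x \<Longrightarrow> 1 \<le> y \<Longrightarrow> f_lam m lam x < f_lam m lam y \<longleftrightarrow> y < x"
  using F_decP by (metis linorder_neqE_linordered_idom order_less_asym order_less_irrefl)

lemma F_ltN_iff: "- int m \<le> x \<Longrightarrow> x \<le> -1 \<Longrightarrow> - int m \<le> y \<Longrightarrow> y \<le> -1 \<Longrightarrow>
    f_lam m lam x < f_lam m lam y \<longleftrightarrow> y < x"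
  using F_decN by (metis linorder_neqE_linordered_idom order_less_asym order_less_irrefl)

lemma F_injP: "1 \<le> x \<Longrightarrow> 1 \<le> y \<Longrightarrow> f_lam m lam x = f_lam m lam y \<Longrightarrow> x = y"
  using F_decP by (metis linorder_neqE_linordered_idom order_less_irrefl)

lemma F_injN: "- int m \<le> x \<Longrightarrow> x \<le> -1 \<Longrightarrow> - int m \<le> y \<Longrightarrow> y \<le> -1 \<Longrightarrow>
    f_lam m lam x = f_lam m lam y \<Longrightarrow> x = y"
  using F_decN by (metis linorder_neqE_linordered_idom order_less_irrefl)

lemma F_bound: "1 \<le> x \<Longrightarrow> f_lam m lam x \<le> lam 1 + 1 - x"
  using F_P lam_mono'[OF V, of 1 x] by simp

lemma F_ev: "\<exists>N\<ge>1. \<forall>x\<ge>N. f_lam m lam x = 1 - x"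
proof -
  obtain N where N: "\<forall>i\<ge>N. lam i = 0" using Xr_D(4)[OF V] by blast
  show ?thesis by (rule exI[of _ "max 1 N"]) (use N F_P in auto)
qed

definition lc :: "int \<Rightarrow> int" where
  "lc j = int (card {k::nat. 1 \<le> k \<and> lam (int k) \<ge> j})"

lemma compl: "(\<exists>j>0. x = j - lc j) \<longleftrightarrow> (\<forall>k\<ge>1. x \<noteq> lam k + 1 - k)"
proof
  assume "\<exists>j>0. x = j - lc j"
  then obtain j where j: "j > 0" "x = j - lc j" by blast
  obtain N where N: "\<forall>i\<ge>N. lam i = 0" using Xr_D(4)[OF V] by blast
  have fin: "finite {k::nat. 1 \<le> k \<and> lam (int k) \<ge> j}"
  proof (rule finite_subset[of _ "{..nat N}"])
    show "{k::nat. 1 \<le> k \<and> lam (int k) \<ge> j} \<subseteq> {..nat N}"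
    proof
      fix k assume "k \<in> {k::nat. 1 \<le> k \<and> lam (int k) \<ge> j}"
      then have "lam (int k) \<noteq> 0" using j by auto
      then have "int k < N" using N by (meson not_le)
      then show "k \<in> {..nat N}" by simp
    qed
  qed simp
  show "\<forall>k\<ge>1. x \<noteq> lam k + 1 - k"
  proof (intro allI impI)
    fix k :: int assume k: "1 \<le> k"
    show "x \<noteq> lam k + 1 - k"
    proof (cases "lam k \<ge> j")
      case True
      have "{1..nat k} \<subseteq> {k::nat. 1 \<le> k \<and> lam (int k) \<ge> j}"
      proof
        fix k' assume "k' \<in> {1..nat k}"
        then have "lam k \<le> lam (int k')" using lam_mono'[OF V, of "int k'" k] k by auto
        then show "k' \<in> {k::nat. 1 \<le> k \<and> lam (int k) \<ge> j}" using True \<open>k' \<in> {1..nat k}\<close> by auto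
      qed
      then have "card {1..nat k} \<le> card {k::nat. 1 \<le> k \<and> lam (int k) \<ge> j}"
        using fin card_mono by blast
      then have "lc j \<ge> k" unfolding lc_def using k by simp
      then show ?thesis using j True by linarith
    next
      case False
      have "{k::nat. 1 \<le> k \<and> lam (int k) \<ge> j} \<subseteq> {1..<nat k}"
      proof
        fix k' assume k': "k' \<in> {k::nat. 1 \<le> k \<and> lam (int k) \<ge> j}"
        have "int k' < k"
        proof (rule ccontr)
          assume "\<not> int k' < k"
          then have "lam (int k') \<le> lam k" using lam_mono'[OF V, of k "int k'"] k by auto
          then show False using k' False by auto
        qed
        then show "k' \<in> {1..<nat k}" using k' by auto
      qed
      then have "card {k::nat. 1 \<le> k \<and> lam (int k) \<ge> j} \<le> card {1..<nat k}"
        using card_mono by blast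
      then have "lc j \<le> k - 1" unfolding lc_def using k by simp
      then show ?thesis using j False by linarith
    qed
  qed
next
  assume nx: "\<forall>k\<ge>1. x \<noteq> lam k + 1 - k"
  define P where "P = (\<lambda>n::nat. 1 \<le> n \<and> lam (int n) + 1 - int n \<le> x)"
  define n1 where "n1 = (LEAST n. P n)"
  have ex: "P (nat (lam 1 + 1 - x) + 1)"
    unfolding P_def using lam_mono'[OF V, of 1 "int (nat (lam 1 + 1 - x) + 1)"] by auto
  have Pn1: "P n1" unfolding n1_def by (rule LeastI[of P, OF ex])
  have notP: "\<And>n. n < n1 \<Longrightarrow> \<not> P n" unfolding n1_def using not_less_Least by blast
  have n1: "1 \<le> n1" "lam (int n1) + 1 - int n1 < x"
    using Pn1 nx[rule_format, of "int n1"] unfolding P_def by auto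
  define K where "K = n1 - 1"
  define j where "j = x + int K"
  have S: "{k::nat. 1 \<le> k \<and> lam (int k) \<ge> j} = {1..K}"
  proof (intro set_eqI iffI)
    fix k assume k: "k \<in> {k::nat. 1 \<le> k \<and> lam (int k) \<ge> j}"
    have "k \<le> K"
    proof (rule ccontr)
      assume "\<not> k \<le> K"
      then have "n1 \<le> k" unfolding K_def by simp
      then have "lam (int k) \<le> lam (int n1)" using lam_mono'[OF V, of "int n1" "int k"] n1 by simp
      then show False using k n1 unfolding j_def K_def by auto
    qed
    then show "k \<in> {1..K}" using k by simp
  next
    fix k assume k: "k \<in> {1..K}"
    then have "\<not> P K" using notP K_def n1 by simp
    then have "lam (int K) \<ge> j" using k unfolding P_def j_def by auto
    moreover have "lam (int K) \<le> lam (int k)" using lam_mono'[OF V, of "int k" "int K"] k by simp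
    ultimately show "k \<in> {k::nat. 1 \<le> k \<and> lam (int k) \<ge> j}" using k by simp
  qed
  have "0 \<le> lam (int n1)" using lam_nonneg[OF V] n1 by simp
  then have "j > 0" using n1 unfolding j_def K_def by linarith
  moreover have "x = j - lc j" unfolding lc_def using S unfolding j_def by simp
  ultimately show "\<exists>j>0. x = j - lc j" by blast
qed

end



lemma step_D:
  assumes "bruhat_step m f g"
  obtains i j where "i \<in> idx m" "j \<in> idx m" "i < j" "f i < f j"
    "g = (\<lambda>k. f (if k = i then j else if k = j then i else k))"
  using assms unfolding bruhat_step_def by blast

lemma bruhat_perm:
  assumes "bruhat_less m f g"
  shows "\<exists>\<pi>. bij_betw \<pi> (idx m) (idx m) \<and> (\<forall>x\<in>idx m. g x = f (\<pi> x))"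
  using assms unfolding bruhat_less_def
proof (induction rule: tranclp_induct)
  case (base g)
  then obtain i j where ij: "i \<in> idx m" "j \<in> idx m" "i < j" "f i < f j"
    "g = (\<lambda>k. f (if k = i then j else if k = j then i else k))" by (rule step_D)
  define t where "t = (\<lambda>k::int. if k = i then j else if k = j then i else k)"
  have "bij_betw t (idx m) (idx m)"
    by (rule bij_betw_byWitness[of _ t]) (use ij in \<open>auto simp: t_def\<close>)
  then show ?case using ij(5) unfolding t_def by blast
next
  case (step g h)
  obtain \<pi>1 where p1: "bij_betw \<pi>1 (idx m) (idx m)" "\<forall>x\<in>idx m. g x = f (\<pi>1 x)"
    using step.IH by blast
  obtain i j where ij: "i \<in> idx m" "j \<in> idx m" "i < j" "g i < g j"
    "h = (\<lambda>k. g (if k = i then j else if k = j then i else k))" using step.hyps(2) by (rule step_D)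
  define t where "t = (\<lambda>k::int. if k = i then j else if k = j then i else k)"
  have bt: "bij_betw t (idx m) (idx m)"
    by (rule bij_betw_byWitness[of _ t]) (use ij in \<open>auto simp: t_def\<close>)
  have "bij_betw (\<pi>1 \<circ> t) (idx m) (idx m)" using bij_betw_trans[OF bt p1(1)] .
  moreover have "\<forall>x\<in>idx m. h x = f ((\<pi>1 \<circ> t) x)"
  proof
    fix x assume "x \<in> idx m"
    then have "t x \<in> idx m" using ij unfolding t_def by auto
    then show "h x = f ((\<pi>1 \<circ> t) x)" using p1(2) ij(5) unfolding t_def by auto
  qed
  ultimately show ?case by blast
qed

lemma bruhat_pot:
  assumes "bruhat_less m f g"
  shows "\<exists>S. finite S \<and> (\<forall>x. x \<notin> S \<longrightarrow> g x = f x) \<and> (\<Sum>x\<in>S. x * (g x - f x)) < 0"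
  using assms unfolding bruhat_less_def
proof (induction rule: tranclp_induct)
  case (base g)
  then obtain i j where ij: "i \<in> idx m" "j \<in> idx m" "i < j" "f i < f j"
    "g = (\<lambda>k. f (if k = i then j else if k = j then i else k))" by (rule step_D)
  have "(\<Sum>x\<in>{i,j}. x * (g x - f x)) = i * (f j - f i) + j * (f i - f j)"
    using ij by simp
  also have "\<dots> = - ((j - i) * (f j - f i))" by (simp add: algebra_simps)
  also have "\<dots> < 0" using ij by simp
  finally show ?case using ij(5) by (intro exI[of _ "{i,j}"]) auto
next
  case (step g h)
  obtain S1 where S1: "finite S1" "\<forall>x. x \<notin> S1 \<longrightarrow> g x = f x" "(\<Sum>x\<in>S1. x * (g x - f x)) < 0"
    using step.IH by blast
  obtain i j where ij: "i \<in> idx m" "j \<in> idx m" "i < j" "g i < g j"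
    "h = (\<lambda>k. g (if k = i then j else if k = j then i else k))" using step.hyps(2) by (rule step_D)
  have A: "(\<Sum>x\<in>{i,j}. x * (h x - g x)) = i * (g j - g i) + j * (g i - g j)"
    using ij by simp
  also have "\<dots> = - ((j - i) * (g j - g i))" by (simp add: algebra_simps)
  also have "\<dots> < 0" using ij by simp
  finally have A: "(\<Sum>x\<in>{i,j}. x * (h x - g x)) < 0" .
  define S where "S = S1 \<union> {i,j}"
  have fS: "finite S" using S1 unfolding S_def by simp
  have e1: "(\<Sum>x\<in>S. x * (g x - f x)) = (\<Sum>x\<in>S1. x * (g x - f x))"
    by (rule sum.mono_neutral_right) (use fS S1 in \<open>auto simp: S_def\<close>)
  have e2: "(\<Sum>x\<in>S. x * (h x - g x)) = (\<Sum>x\<in>{i,j}. x * (h x - g x))"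
    by (rule sum.mono_neutral_right) (use fS ij in \<open>auto simp: S_def\<close>)
  have "(\<Sum>x\<in>S. x * (h x - f x)) = (\<Sum>x\<in>S. x * (h x - g x) + x * (g x - f x))"
    by (rule sum.cong) (auto simp: algebra_simps)
  also have "\<dots> = (\<Sum>x\<in>S. x * (h x - g x)) + (\<Sum>x\<in>S. x * (g x - f x))"
    by (rule sum.distrib)
  finally have "(\<Sum>x\<in>S. x * (h x - f x)) < 0" using e1 e2 A S1(3) by linarith
  moreover have "\<forall>x. x \<notin> S \<longrightarrow> h x = f x" using S1(2) ij(5) unfolding S_def by auto
  ultimately show ?case using fS by blast
qed

lemma bruhat_irrefl: "\<not> bruhat_less m f f"
  using bruhat_pot[of m f f] by auto




locale valid =
  fixes m :: nat and lam :: "int \<Rightarrow> int"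
  assumes V: "lam \<in> Xplus_red m"
begin

abbreviation F where "F \<equiv> f_lam m lam"

definition AT where "AT = {i. - int m \<le> i \<and> i \<le> -1 \<and> F i \<notin> F ` {x. 1 \<le> x}}"

lemma AT_fin: "finite AT"
  by (rule finite_subset[of _ "{- int m..-1}"]) (auto simp: AT_def)

lemma notinFP: "(F i \<notin> F ` {x. 1 \<le> x}) \<longleftrightarrow> (\<forall>k\<ge>1. F i \<noteq> lam k + 1 - k)"
  using F_P[of _ m lam] by (auto simp: image_def)

lemma atyp_eq: "atyp_degree m (natural m lam) = card AT"
proof -
  have "{i. - int m \<le> i \<and> i \<le> -1 \<and>
      (\<exists>j>0. pair_super (\<lambda>k. natural m lam k + rho_super k) i
             - pair_super (\<lambda>k. natural m lam k + rho_super k) j = 0)} = AT"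
  proof (intro set_eqI)
    fix i
    show "i \<in> {i. - int m \<le> i \<and> i \<le> -1 \<and>
      (\<exists>j>0. pair_super (\<lambda>k. natural m lam k + rho_super k) i
             - pair_super (\<lambda>k. natural m lam k + rho_super k) j = 0)} \<longleftrightarrow> i \<in> AT"
    proof (cases "- int m \<le> i \<and> i \<le> -1")
      case True
      have pi: "pair_super (\<lambda>k. natural m lam k + rho_super k) i = F i"
        using True F_N[of m i lam] by (simp add: pair_super_def natural_def rho_super_def)
      have pj: "pair_super (\<lambda>k. natural m lam k + rho_super k) j = j - lc lam j" if "j > 0" for j
        using that lc_def[OF V] by (simp add: pair_super_def natural_def rho_super_def)
      have "(\<exists>j>0. pair_super (\<lambda>k. natural m lam k + rho_super k) i
             - pair_super (\<lambda>k. natural m lam k + rho_super k) j = 0) \<longleftrightarrow> (\<exists>j>0. F i = j - lc lam j)"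
        using pi pj by (metis eq_iff_diff_eq_0)
      also have "\<dots> \<longleftrightarrow> F i \<notin> F ` {x. 1 \<le> x}" using compl[OF V] notinFP by simp
      finally show ?thesis using True by (simp add: AT_def)
    qed (auto simp: AT_def)
  qed
  then show ?thesis unfolding atyp_degree_def by simp
qed

abbreviation SU where "SU \<equiv> sigma_upto m F"

lemma SU_mono: "k \<le> n \<Longrightarrow> SU k \<subseteq> SU n"
  by (induction n) (auto simp: le_Suc_eq)

lemma SU_level: "p \<in> SU n \<Longrightarrow> \<exists>k. p \<in> SU (Suc k) \<and> p \<notin> SU k"
  by (induction n) auto

lemma SU_new: "p \<in> SU (Suc k) \<Longrightarrow> p \<notin> SU k \<Longrightarrow>
   atyp_pair m F p \<and> pair_dist F p = int (Suc k) \<and> (\<forall>q\<in>SU k. disjoint_pairs p q)"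
  by auto

lemma SP_level: "p \<in> sigma_plus m F \<Longrightarrow> \<exists>k. p \<in> SU (Suc k) \<and> p \<notin> SU k"
  unfolding sigma_plus_def using SU_level by blast

lemma atyp_fst: "atyp_pair m F p \<Longrightarrow> fst p \<in> AT"
  unfolding atyp_pair_def AT_def by (cases p) (auto simp: image_def)

lemma SP_atyp: "p \<in> sigma_plus m F \<Longrightarrow> atyp_pair m F p"
  using SP_level SU_new by blast

lemma SP_inj: "inj_on fst (sigma_plus m F)"
proof (rule inj_onI)
  fix p q assume p: "p \<in> sigma_plus m F" and q: "q \<in> sigma_plus m F" and e: "fst p = fst q"
  obtain a where a: "p \<in> SU (Suc a)" "p \<notin> SU a" using SP_level[OF p] by blast
  obtain b where b: "q \<in> SU (Suc b)" "q \<notin> SU b" using SP_level[OF q] by blast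
  have na: "\<not> a < b"
  proof
    assume "a < b"
    then have "p \<in> SU b" using SU_mono[of "Suc a" b] a by auto
    then show False using SU_new[OF b] e by (auto simp: disjoint_pairs_def)
  qed
  have nb: "\<not> b < a"
  proof
    assume "b < a"
    then have "q \<in> SU a" using SU_mono[of "Suc b" a] b by auto
    then show False using SU_new[OF a] e by (auto simp: disjoint_pairs_def)
  qed
  have "a = b" using na nb by simp
  then have "F (snd p) = F (snd q)"
    using SU_new[OF a] SU_new[OF b] e by (auto simp: pair_dist_def)
  moreover have "snd p > 0" "snd q > 0" using SU_new[OF a] SU_new[OF b]
    by (auto simp: atyp_pair_def split: prod.splits)
  ultimately have "snd p = snd q" using F_injP[OF V] by simp
  then show "p = q" using e by (simp add: prod_eq_iff)
qed

lemma SP_fin: "finite (sigma_plus m F)"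
proof -
  have "fst ` sigma_plus m F \<subseteq> AT" using SP_atyp atyp_fst by blast
  then have "finite (fst ` sigma_plus m F)" using AT_fin finite_subset by blast
  then show ?thesis using finite_imageD SP_inj by blast
qed

lemma FP_small: "\<exists>B\<ge>1. \<forall>b\<ge>B. F b < c" for c
  by (rule exI[of _ "max 1 (lam 1 + 2 - c)"]) (use F_bound[OF V] in force)

lemma AT_lowerN: "- int m \<le> a \<Longrightarrow> a \<le> -1 \<Longrightarrow> F (-1) \<le> F a"
  using F_decN[OF V, of a "-1"] by (cases "a = -1") auto

lemma SP_surj: "AT \<subseteq> fst ` sigma_plus m F"
proof
  fix i assume i: "i \<in> AT"
  show "i \<in> fst ` sigma_plus m F"
  proof (rule ccontr)
    assume ni: "i \<notin> fst ` sigma_plus m F"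
    have im: "- int m \<le> i" "i \<le> -1" "F i \<notin> F ` {x. 1 \<le> x}" using i by (auto simp: AT_def)
    obtain B where B: "B \<ge> 1" "\<forall>b\<ge>B. F b < F (-1)" using FP_small by blast
    have "{B..} \<subseteq> snd ` sigma_plus m F"
    proof
      fix b assume "b \<in> {B..}"
      then have b: "b \<ge> 1" "F b < F (-1)" using B by auto
      have Fbi: "F b < F i" using b AT_lowerN[OF im(1,2)] by simp
      have ap: "atyp_pair m F (i, b)"
        unfolding atyp_pair_def using im b Fbi AT_lowerN
        by (auto simp: image_def) (smt (verit))
      define d where "d = nat (F i - F b - 1)"
      have pd: "pair_dist F (i, b) = int (Suc d)" unfolding pair_dist_def d_def using Fbi by simp
      have "(i, b) \<notin> SU (Suc d)"
      proof
        assume "(i, b) \<in> SU (Suc d)"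
        then have "(i,b) \<in> sigma_plus m F" unfolding sigma_plus_def by blast
        then show False using ni by force
      qed
      then obtain q where q: "q \<in> SU d" "\<not> disjoint_pairs (i,b) q" using ap pd by auto
      have "q \<in> sigma_plus m F" using q unfolding sigma_plus_def by blast
      moreover have "fst q \<noteq> i" using ni \<open>q \<in> sigma_plus m F\<close> by force
      ultimately show "b \<in> snd ` sigma_plus m F" using q(2)
        by (force simp: disjoint_pairs_def)
    qed
    moreover have "infinite {B..}" by (rule infinite_Ici)
    ultimately show False using SP_fin finite_subset by blast
  qed
qed

lemma part1: "J_atyp_degree m lam = card AT"
proof -
  have "fst ` sigma_plus m F = AT" using SP_surj SP_atyp atyp_fst by blast
  then show ?thesis unfolding J_atyp_degree_def using SP_inj card_image by metis
qed

end



definition swp :: "(int \<Rightarrow> int) \<Rightarrow> int \<Rightarrow> int \<Rightarrow> nat \<Rightarrow> int \<Rightarrow> int" where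
  "swp G a d s x = (if a \<le> x \<and> x < a + int s then G (x + d)
     else if a + d \<le> x \<and> x < a + d + int s then G (x - d) else G x)"

lemma swp0: "swp G a d 0 = G"
  unfolding swp_def by auto

lemma swp_invol: "int n \<le> d \<Longrightarrow> swp (swp G a d n) a d n = G"
  unfolding swp_def by (rule ext) auto

lemma swp_step:
  assumes "int s < d" "a + int s \<in> idx m" "a + int s + d \<in> idx m"
    "G (a + int s) < G (a + int s + d)"
  shows "bruhat_step m (swp G a d s) (swp G a d (Suc s))"
  unfolding bruhat_step_def
proof (intro exI conjI)
  show "a + int s \<in> idx m" "a + int s + d \<in> idx m" by fact+
  show "a + int s < a + int s + d" using assms(1) by simp
  show "swp G a d s (a + int s) < swp G a d s (a + int s + d)"
    using assms unfolding swp_def by auto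
  show "swp G a d (Suc s) = (\<lambda>k. swp G a d s (if k = a + int s then a + int s + d
      else if k = a + int s + d then a + int s else k))"
    using assms(1) unfolding swp_def by (rule_tac ext) auto
qed

lemma swp_chain:
  assumes "int n \<le> d"
    and "\<And>s. s < n \<Longrightarrow> a + int s \<in> idx m \<and> a + int s + d \<in> idx m \<and> G (a + int s) < G (a + int s + d)"
  shows "1 \<le> s \<Longrightarrow> s \<le> n \<Longrightarrow> bruhat_less m G (swp G a d s)"
proof (induction s)
  case 0 then show ?case by simp
next
  case (Suc s)
  have st: "bruhat_step m (swp G a d s) (swp G a d (Suc s))"
    using swp_step[of s d a m G] assms Suc.prems by simp
  show ?case
  proof (cases "s = 0")
    case True
    then show ?thesis using st swp0[of G a d] unfolding bruhat_less_def by auto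
  next
    case False
    then have "bruhat_less m G (swp G a d s)" using Suc by simp
    then show ?thesis using st unfolding bruhat_less_def by auto
  qed
qed




lemma card_inj_fiber:
  assumes "inj_on H A"
  shows "card {x\<in>A. H x = v} = (if v \<in> H ` A then 1 else 0)"
proof (cases "v \<in> H ` A")
  case True
  then obtain a where a: "a \<in> A" "H a = v" by blast
  have "{x\<in>A. H x = v} = {a}" using a assms by (auto dest: inj_onD)
  then show ?thesis using True by simp
next
  case False
  then have e: "{x\<in>A. H x = v} = {}" by auto
  show ?thesis unfolding e using False by simp
qed

lemma fin_inj_fiber:
  assumes "inj_on H A"
  shows "finite {x\<in>A. H x = v}"
proof (rule finite_subset[of _ "{inv_into A H v}"])
  show "{x\<in>A. H x = v} \<subseteq> {inv_into A H v}"
    using inv_into_f_f[OF assms] by auto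
qed simp

lemma rank_eq:
  fixes H1 H2 :: "int \<Rightarrow> int" and S :: "int set"
  assumes d1: "\<And>x y. x \<in> S \<Longrightarrow> y \<in> S \<Longrightarrow> x < y \<Longrightarrow> H1 y < H1 x"
    and d2: "\<And>x y. x \<in> S \<Longrightarrow> y \<in> S \<Longrightarrow> x < y \<Longrightarrow> H2 y < H2 x"
    and im: "H1 ` S = H2 ` S"
    and fin: "\<And>t. finite {s\<in>S. s < t}"
    and t: "t \<in> S"
  shows "H1 t = H2 t"
proof -
  have inj1: "inj_on H1 S" using d1 by (metis inj_onI linorder_neqE_linordered_idom order_less_irrefl)
  have inj2: "inj_on H2 S" using d2 by (metis inj_onI linorder_neqE_linordered_idom order_less_irrefl)
  have up1: "{y \<in> H1 ` S. y > H1 u} = H1 ` {s\<in>S. s < u}" if "u \<in> S" for u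
    using d1 that by (auto simp: image_def) (metis linorder_neqE_linordered_idom order_less_asym)
  have up2: "{y \<in> H2 ` S. y > H2 u} = H2 ` {s\<in>S. s < u}" if "u \<in> S" for u
    using d2 that by (auto simp: image_def) (metis linorder_neqE_linordered_idom order_less_asym)
  obtain t' where t': "t' \<in> S" "H1 t = H2 t'" using im t by (metis imageI image_iff)
  have "H1 ` {s\<in>S. s < t} = H2 ` {s\<in>S. s < t'}" using up1[OF t] up2[OF t'(1)] im t' by simp
  then have "card {s\<in>S. s < t} = card {s\<in>S. s < t'}"
    using card_image[OF inj_on_subset[OF inj1]] card_image[OF inj_on_subset[OF inj2]]
    by (metis (no_types, lifting) mem_Collect_eq subsetI)
  moreover have "t = t'"
  proof (rule ccontr)
    assume "t \<noteq> t'"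
    then consider "t < t'" | "t' < t" by linarith
    then show False
    proof cases
      case 1
      have "{s\<in>S. s < t} \<subset> {s\<in>S. s < t'}" using 1 t by auto
      then have "card {s\<in>S. s < t} < card {s\<in>S. s < t'}" using fin psubset_card_mono by blast
      then show False using calculation by simp
    next
      case 2
      have "{s\<in>S. s < t'} \<subset> {s\<in>S. s < t}" using 2 t' by auto
      then have "card {s\<in>S. s < t'} < card {s\<in>S. s < t}" using fin psubset_card_mono by blast
      then show False using calculation by simp
    qed
  qed
  ultimately show ?thesis using t' by simp
qed

context valid
begin

abbreviation NS where "NS \<equiv> {x::int. - int m \<le> x \<and> x \<le> -1}"
abbreviation PS where "PS \<equiv> {x::int. 1 \<le> x}"

lemma idx_split: "idx m = NS \<union> PS" unfolding idx_def by auto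

lemma cnt_valid:
  assumes W: "mu \<in> Xplus_red m"
  shows "card {x\<in>idx m. f_lam m mu x = v} =
     (if v \<in> f_lam m mu ` NS then 1 else 0) + (if v \<in> f_lam m mu ` PS then 1 else 0)"
proof -
  have iN: "inj_on (f_lam m mu) NS" using F_injN[OF W] by (auto intro: inj_onI)
  have iP: "inj_on (f_lam m mu) PS" using F_injP[OF W] by (auto intro: inj_onI)
  have e: "{x\<in>idx m. f_lam m mu x = v} = {x\<in>NS. f_lam m mu x = v} \<union> {x\<in>PS. f_lam m mu x = v}"
    unfolding idx_split by auto
  have f1: "finite {x\<in>NS. f_lam m mu x = v}" by (rule finite_subset[of _ "{- int m..-1}"]) auto
  have f2: "finite {x\<in>PS. f_lam m mu x = v}" by (rule fin_inj_fiber[OF iP])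
  have "card {x\<in>idx m. f_lam m mu x = v} = card {x\<in>NS. f_lam m mu x = v} + card {x\<in>PS. f_lam m mu x = v}"
    unfolding e by (rule card_Un_disjoint[OF f1 f2]) auto
  then show ?thesis using card_inj_fiber[OF iN] card_inj_fiber[OF iP] by simp
qed

lemma cnt_perm:
  assumes b: "bij_betw \<pi> (idx m) (idx m)" and e: "\<forall>x\<in>idx m. g x = f (\<pi> x)"
  shows "card {x\<in>idx m. g x = v} = card {x\<in>idx m. f x = v}"
proof -
  have im: "\<pi> ` idx m = idx m" using b by (simp add: bij_betw_def)
  have T: "\<pi> ` {x\<in>idx m. g x = v} = {x\<in>idx m. f x = v}"
  proof (intro set_eqI iffI)
    fix y assume "y \<in> \<pi> ` {x\<in>idx m. g x = v}"
    then obtain x where x: "x \<in> idx m" "g x = v" "y = \<pi> x" by blast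
    have "\<pi> x \<in> idx m" using im x(1) by blast
    moreover have "f (\<pi> x) = v" using e x(1,2) by simp
    ultimately show "y \<in> {x\<in>idx m. f x = v}" using x(3) by simp
  next
    fix y assume y: "y \<in> {x\<in>idx m. f x = v}"
    then have "y \<in> \<pi> ` idx m" using im by simp
    then obtain x where x: "x \<in> idx m" "\<pi> x = y" by blast
    have "g x = v" using e x y by simp
    then show "y \<in> \<pi> ` {x\<in>idx m. g x = v}" using x by blast
  qed
  have "inj_on \<pi> {x\<in>idx m. g x = v}"
    by (rule inj_on_subset[OF bij_betw_imp_inj_on[OF b]]) auto
  then have "card (\<pi> ` {x\<in>idx m. g x = v}) = card {x\<in>idx m. g x = v}" by (rule card_image)
  then show ?thesis unfolding T by simp
qed


end

context valid begin
lemma ind_2: "(if a then 1 else 0) + (if b then 1 else 0) = (2::nat) \<Longrightarrow> a \<and> b"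
  by (cases a; cases b) auto
lemma ind_1: "(if a then 1 else 0) + (if b then 1 else 0) = (1::nat) \<Longrightarrow> \<not> a \<Longrightarrow> b"
  by (cases a; cases b) auto
lemma ind_ge1: "(if a then 1 else 0) + (if b then 1 else 0) \<ge> (1::nat) \<Longrightarrow> a \<or> b"
  by (cases a; cases b) auto
lemma ind_a: "a \<Longrightarrow> b \<Longrightarrow> (if a then 1 else 0) + (if b then 1 else 0) = (2::nat)"
  by simp
lemma ind_b: "\<not> a \<Longrightarrow> b \<Longrightarrow> (if a then 1 else 0) + (if b then 1 else 0) = (1::nat)"
  by simp
lemma ind_c: "b \<Longrightarrow> (if a then 1 else 0) + (if b then 1 else 0) \<ge> (1::nat)"
  by simp

lemma typ_dir:
  assumes AT0: "AT = {}"
  shows "J_typical m lam"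
  unfolding J_typical_def
proof
  assume "\<exists>mu\<in>Xplus_red m. bruhat_less m (f_lam m mu) F"
  then obtain mu where W: "mu \<in> Xplus_red m" and bl: "bruhat_less m (f_lam m mu) F" by blast
  define G where "G = f_lam m mu"
  obtain \<pi> where pi: "bij_betw \<pi> (idx m) (idx m)" "\<forall>x\<in>idx m. F x = G (\<pi> x)"
    using bruhat_perm[OF bl] unfolding G_def by blast
  have cnt: "card {x\<in>idx m. F x = v} = card {x\<in>idx m. G x = v}" for v
    using cnt_perm[OF pi] .
  have cF: "card {x\<in>idx m. F x = v} = (if v \<in> F ` NS then 1 else 0) + (if v \<in> F ` PS then 1 else 0)" for v
    using cnt_valid[OF V] .
  have cG: "card {x\<in>idx m. G x = v} = (if v \<in> G ` NS then 1 else 0) + (if v \<in> G ` PS then 1 else 0)" for v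
    unfolding G_def using cnt_valid[OF W] .
  have FNP: "F ` NS \<subseteq> F ` PS" using AT0 unfolding AT_def by auto
  have two: "v \<in> G ` NS \<and> v \<in> G ` PS" if "v \<in> F ` NS" for v
  proof -
    have vp: "v \<in> F ` PS" using that FNP by blast
    have "card {x\<in>idx m. F x = v} = 2" unfolding cF[of v] by (rule ind_a[OF that vp])
    then have "card {x\<in>idx m. G x = v} = 2" using cnt by simp
    then show ?thesis unfolding cG[of v] by (rule ind_2)
  qed
  have iNF: "inj_on F NS" using F_injN[OF V] by (auto intro: inj_onI)
  have iNG: "inj_on G NS" unfolding G_def using F_injN[OF W] by (auto intro: inj_onI)
  have finN: "finite NS" by (rule finite_subset[of _ "{- int m..-1}"]) auto
  have "card (F ` NS) = card (G ` NS)" using card_image[OF iNF] card_image[OF iNG] by simp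
  moreover have "F ` NS \<subseteq> G ` NS" using two by blast
  ultimately have GN0: "F ` NS = G ` NS" using card_subset_eq[of "G ` NS" "F ` NS"] finN by simp
  then have GN: "G ` NS = F ` NS" by simp
  have GP: "G ` PS = F ` PS"
  proof (intro set_eqI iffI)
    fix v assume "v \<in> G ` PS"
    then have "card {x\<in>idx m. G x = v} \<ge> 1" unfolding cG[of v] by (rule ind_c)
    then have "card {x\<in>idx m. F x = v} \<ge> 1" using cnt by simp
    then have "v \<in> F ` NS \<or> v \<in> F ` PS" unfolding cF[of v] by (rule ind_ge1)
    then show "v \<in> F ` PS" using FNP by blast
  next
    fix v assume v: "v \<in> F ` PS"
    show "v \<in> G ` PS"
    proof (cases "v \<in> F ` NS")
      case True then show ?thesis using two by blast
    next
      case False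
      then have "card {x\<in>idx m. F x = v} = 1" unfolding cF[of v] using v by (rule ind_b)
      then have "card {x\<in>idx m. G x = v} = 1" using cnt by simp
      moreover have "v \<notin> G ` NS" using False GN by simp
      ultimately show ?thesis unfolding cG[of v] by (rule ind_1)
    qed
  qed
  have dG: "G y < G x" if "x \<in> NS" "y \<in> NS" "x < y" for x y
    unfolding G_def using F_decN[OF W] that by simp
  have dF: "F y < F x" if "x \<in> NS" "y \<in> NS" "x < y" for x y
    using F_decN[OF V] that by simp
  have dGP: "G y < G x" if "x \<in> PS" "y \<in> PS" "x < y" for x y
    unfolding G_def using F_decP[OF W] that by simp
  have dFP: "F y < F x" if "x \<in> PS" "y \<in> PS" "x < y" for x y
    using F_decP[OF V] that by simp
  have finNs: "finite {s \<in> NS. s < u}" for u by (rule finite_subset[OF _ finN]) auto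
  have finPs: "finite {s \<in> PS. s < u}" for u by (rule finite_subset[of _ "{1..u}"]) auto
  have eqN: "F t = G t" if "t \<in> NS" for t
    by (rule rank_eq[of NS F G, OF dF dG GN0 finNs that])
  have eqP: "F t = G t" if "t \<in> PS" for t
    by (rule rank_eq[of PS F G, OF dFP dGP GP[symmetric] finPs that])
  have "G = F"
  proof
    fix x show "G x = F x"
    proof (cases "x \<in> idx m")
      case True then show ?thesis using eqN eqP unfolding idx_split by auto
    next
      case False then show ?thesis unfolding G_def using F_out by simp
    qed
  qed
  then show False using bl bruhat_irrefl unfolding G_def by metis
qed

end



context valid
begin

lemma constr:
  fixes i j j0 :: int and r :: nat
  assumes i: "- int m \<le> i" and j0: "1 \<le> j0" and jr: "j = j0 + int r"
    and C1: "i + int r \<le> -1"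
    and C2: "\<And>s. s \<le> r \<Longrightarrow> F (j0 + int s) < F (i + int s)"
    and C3: "F (j+1) < F (i + int r)"
    and C4: "i + int r + 1 \<le> -1 \<Longrightarrow> F (i + int r + 1) < F j"
    and C5: "2 \<le> j0 \<Longrightarrow> F i < F (j0 - 1)"
  shows "\<not> J_typical m lam"
proof -
  define d where "d = j0 - i"
  define G where "G = swp F i d (Suc r)"
  have G1: "G x = F (x + d)" if "i \<le> x" "x \<le> i + int r" for x
    using that unfolding G_def swp_def by simp
  have G2: "G x = F (x - d)" if "j0 \<le> x" "x \<le> j" for x
    using that C1 j0 jr unfolding G_def swp_def d_def by simp
  have G3: "G x = F x" if "\<not> (i \<le> x \<and> x \<le> i + int r)" "\<not> (j0 \<le> x \<and> x \<le> j)" for x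
    using that jr unfolding G_def swp_def d_def by auto
  have VN: "G (x+1) < G x" if x: "- int m \<le> x" "x < -1" for x
  proof -
    consider "x + 1 < i" | "x + 1 = i" | "i \<le> x \<and> x + 1 \<le> i + int r" | "x = i + int r" | "i + int r < x"
      by linarith
    then show ?thesis
    proof cases
      case 1 then show ?thesis using G3[of x] G3[of "x+1"] F_decN[OF V, of x "x+1"] x j0 by simp
    next
      case 2
      have "G x = F x" using G3[of x] 2 j0 x by simp
      moreover have "G (x+1) = F j0" using G1[of "x+1"] 2 unfolding d_def by simp
      moreover have "F i < F x" using F_decN[OF V, of x i] 2 x by simp
      moreover have "F j0 < F i" using C2[of 0] by simp
      ultimately show ?thesis by simp
    next
      case 3
      then have "G x = F (x + d)" "G (x+1) = F (x + 1 + d)" using G1 by auto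
      moreover have "1 \<le> x + d" using 3 j0 unfolding d_def by simp
      ultimately show ?thesis using F_decP[OF V, of "x + d" "x + 1 + d"] by simp
    next
      case 4
      then have "G x = F j" using G1[of x] jr unfolding d_def by (simp add: add.commute)
      moreover have "G (x+1) = F (x+1)" using G3[of "x+1"] 4 x j0 by simp
      ultimately show ?thesis using C4 4 x by simp
    next
      case 5
      then show ?thesis using G3[of x] G3[of "x+1"] F_decN[OF V, of x "x+1"] x j0 by simp
    qed
  qed
  have VP: "G (x+1) < G x" if x: "1 \<le> x" for x
  proof -
    consider "x + 1 < j0" | "x + 1 = j0" | "j0 \<le> x \<and> x + 1 \<le> j" | "x = j" | "j < x"
      using jr by linarith
    then show ?thesis
    proof cases
      case 1 then show ?thesis using G3[of x] G3[of "x+1"] F_decP[OF V, of x "x+1"] x C1 by simp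
    next
      case 2
      have "G x = F x" using G3[of x] 2 C1 x by simp
      moreover have "G (x+1) = F i" using G2[of "x+1"] 2 jr unfolding d_def by simp
      moreover have "F i < F x"
      proof -
        have xe: "x = j0 - 1" using 2 by simp
        show ?thesis unfolding xe using C5 2 x by simp
      qed
      ultimately show ?thesis by simp
    next
      case 3
      then have "G x = F (x - d)" "G (x+1) = F (x + 1 - d)" using G2 by auto
      moreover have "x - d \<ge> - int m" "x + 1 - d \<le> -1" using 3 i C1 jr unfolding d_def by auto
      ultimately show ?thesis using F_decN[OF V, of "x - d" "x + 1 - d"] by simp
    next
      case 4
      then have "G x = F (i + int r)" using G2[of x] jr j0 unfolding d_def by (simp add: add.commute)
      moreover have "G (x+1) = F (x+1)" using G3[of "x+1"] 4 C1 j0 jr by simp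
      ultimately show ?thesis using C3 4 by simp
    next
      case 5
      then show ?thesis using G3[of x] G3[of "x+1"] F_decP[OF V, of x "x+1"] x C1 by simp
    qed
  qed
  have V0: "G x = 0" if "x \<notin> idx m" for x
  proof -
    have "\<not> (i \<le> x \<and> x \<le> i + int r)" "\<not> (j0 \<le> x \<and> x \<le> j)"
      using that i C1 j0 unfolding idx_iff by auto
    then show ?thesis using G3 F_out[OF that] by simp
  qed
  obtain N where N: "N \<ge> 1" "\<forall>x\<ge>N. F x = 1 - x" using F_ev[OF V] by blast
  have VE: "G x = 1 - x" if "x \<ge> max N (j+1)" for x
    using G3[of x] N that C1 jr by auto
  define mu where "mu = (\<lambda>x. if x \<in> idx m then G x - rho_c x else 0)"
  have fmu: "f_lam m mu = G"
  proof
    fix x show "f_lam m mu x = G x"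
      by (cases "x \<in> idx m") (auto simp: f_lam_def mu_def V0)
  qed
  have mu: "mu \<in> Xplus_red m"
    unfolding Xplus_red_def
  proof (intro CollectI conjI allI impI)
    show "mu x = 0" if "x \<notin> idx m" for x using that by (simp add: mu_def)
    show "mu (x + 1) \<le> mu x" if "- int m \<le> x \<and> x < -1" for x
      using that VN[of x] by (simp add: mu_def idx_iff rho_c_def)
    show "mu (x + 1) \<le> mu x" if "1 \<le> x" for x
      using that VP[of x] by (simp add: mu_def idx_iff rho_c_def)
    show "\<exists>N. \<forall>x\<ge>N. mu x = 0"
      by (rule exI[of _ "max N (j+1)"]) (use VE N in \<open>auto simp: mu_def idx_iff rho_c_def\<close>)
  qed
  have "bruhat_less m G (swp G i d (Suc r))"
  proof (rule swp_chain[of "Suc r" d i m G "Suc r"])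
    show "int (Suc r) \<le> d" using C1 j0 unfolding d_def by simp
    fix s assume s: "s < Suc r"
    have a: "i + int s \<in> idx m" using s i C1 unfolding idx_iff by simp
    have b: "i + int s + d \<in> idx m" using s j0 unfolding idx_iff d_def by simp
    have "G (i + int s) = F (j0 + int s)" using G1[of "i + int s"] s unfolding d_def by (simp add: add.commute)
    moreover have "G (i + int s + d) = F (i + int s)" using G2[of "i + int s + d"] s jr unfolding d_def by (simp add: add.commute)
    ultimately show "i + int s \<in> idx m \<and> i + int s + d \<in> idx m \<and> G (i + int s) < G (i + int s + d)"
      using a b C2[of s] s by simp
  qed auto
  moreover have "swp G i d (Suc r) = F" unfolding G_def
    by (rule swp_invol) (use C1 j0 in \<open>simp add: d_def\<close>)
  ultimately have "bruhat_less m (f_lam m mu) F" using fmu by simp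
  then show ?thesis unfolding J_typical_def using mu by blast
qed

end



context valid
begin

definition pr where "pr a b \<longleftrightarrow> - int m \<le> a \<and> a \<le> -1 \<and> 1 \<le> b \<and> F b < F a \<and>
   F a \<notin> F ` PS \<and> F b \<notin> F ` NS"

lemma min_pair:
  assumes "AT \<noteq> {}"
  shows "\<exists>i j. pr i j \<and> (\<forall>a b. pr a b \<longrightarrow> F i - F j \<le> F a - F b)"
proof -
  obtain i0 where i0: "i0 \<in> AT" using assms by blast
  have im: "- int m \<le> i0" "i0 \<le> -1" "F i0 \<notin> F ` PS" using i0 by (auto simp: AT_def)
  obtain B where B: "B \<ge> 1" "\<forall>b\<ge>B. F b < F (-1)" using FP_small by blast
  have "F B \<notin> F ` NS"
  proof
    assume "F B \<in> F ` NS"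
    then obtain a where "a \<in> NS" "F B = F a" by blast
    then show False using AT_lowerN[of a] B by force
  qed
  then have p0: "pr i0 B" unfolding pr_def using im B AT_lowerN[OF im(1,2)] by force
  define D where "D = {n::nat. \<exists>a b. pr a b \<and> int n = F a - F b}"
  have "nat (F i0 - F B) \<in> D" unfolding D_def using p0 by (auto simp: pr_def)
  then have "(LEAST n. n \<in> D) \<in> D" by (rule LeastI)
  then obtain i j where ij: "pr i j" "int (LEAST n. n \<in> D) = F i - F j" unfolding D_def by blast
  have "F i - F j \<le> F a - F b" if "pr a b" for a b
  proof -
    have "nat (F a - F b) \<in> D" unfolding D_def using that by (auto simp: pr_def)
    then have "(LEAST n. n \<in> D) \<le> nat (F a - F b)" by (rule Least_le)
    then show ?thesis using ij(2) that by (auto simp: pr_def)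
  qed
  then show ?thesis using ij(1) by blast
qed

lemma atyp_dir:
  assumes "AT \<noteq> {}"
  shows "\<not> J_typical m lam"
proof -
  obtain i j where pij: "pr i j" and mn: "\<And>a b. pr a b \<Longrightarrow> F i - F j \<le> F a - F b"
    using min_pair[OF assms] by blast
  have i: "- int m \<le> i" "i \<le> -1" and j: "1 \<le> j" and wv: "F j < F i"
    and vP: "F i \<notin> F ` PS" and wN: "F j \<notin> F ` NS" using pij unfolding pr_def by auto
  have M1: "F b \<in> F ` NS" if "1 \<le> b" "F j < F b" "F b < F i" for b
  proof (rule ccontr)
    assume "F b \<notin> F ` NS"
    then have "pr i b" unfolding pr_def using i that vP by auto
    then show False using mn[of i b] that by simp
  qed
  have M2: "F a \<in> F ` PS" if "- int m \<le> a" "a \<le> -1" "F j < F a" "F a < F i" for a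
  proof (rule ccontr)
    assume "F a \<notin> F ` PS"
    then have "pr a j" unfolding pr_def using j that wN by auto
    then show False using mn[of a j] that by simp
  qed
  define Q where "Q = (\<lambda>n::nat. 1 \<le> n \<and> F (int n) < F i)"
  define n0 where "n0 = (LEAST n. Q n)"
  have Qj: "Q (nat j)" unfolding Q_def using j wv by simp
  have Qn0: "Q n0" unfolding n0_def by (rule LeastI[of Q, OF Qj])
  have n0j: "n0 \<le> nat j" unfolding n0_def by (rule Least_le[of Q, OF Qj])
  define j0 where "j0 = int n0"
  have j0: "1 \<le> j0" "F j0 < F i" "j0 \<le> j" using Qn0 n0j j unfolding Q_def j0_def by auto
  have below: "F i < F b" if "1 \<le> b" "b < j0" for b
  proof -
    have "nat b < n0" using that unfolding j0_def by simp
    then have "\<not> Q (nat b)" unfolding n0_def by (rule not_less_Least)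
    then have "F i \<le> F b" unfolding Q_def using that by auto
    moreover have "F i \<noteq> F b" using vP that by auto
    ultimately show ?thesis by simp
  qed
  define r where "r = nat (j - j0)"
  have jr: "j = j0 + int r" unfolding r_def using j0 by simp
  define c where "c = (\<lambda>k::nat. if k = 0 then F i else F (j0 + int k - 1))"
  have cv: "c k \<le> F i" for k
  proof (cases "k = 0")
    case False
    then have "F (j0 + int k - 1) < F j0 \<or> j0 + int k - 1 = j0"
      using F_decP[OF V, of j0 "j0 + int k - 1"] j0 by force
    then show ?thesis using False j0 unfolding c_def by auto
  qed (simp add: c_def)
  have cgt: "F (j0 + int k) < c k" for k
  proof (cases "k = 0")
    case True then show ?thesis using j0 by (simp add: c_def)
  next
    case False then show ?thesis using F_decP[OF V, of "j0 + int k - 1" "j0 + int k"] j0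
      by (simp add: c_def)
  qed
  have E: "k \<le> r \<Longrightarrow> i + int k \<le> -1 \<and> F (i + int k) = c k" for k
  proof (induction k)
    case 0 then show ?case using i by (simp add: c_def)
  next
    case (Suc k)
    then have IH: "i + int k \<le> -1" "F (i + int k) = c k" by auto
    define b where "b = j0 + int k"
    have b: "1 \<le> b" "b < j" using j0 Suc.prems jr unfolding b_def by auto
    have Fb1: "F j < F b" using F_decP[OF V b(1) b(2)] .
    have Fb2: "F b < c k" unfolding b_def by (rule cgt)
    have Fb3: "F b < F i" using Fb2 cv[of k] by simp
    obtain a where a: "- int m \<le> a" "a \<le> -1" "F b = F a" using M1[OF b(1) Fb1 Fb3] by auto
    have "F a < F (i + int k)" using a Fb2 IH by simp
    then have ai: "i + int k < a" using F_ltN_iff[OF V a(1) a(2), of "i + int k"] IH i by simp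
    have eq: "F (i + int k + 1) = F a"
    proof (rule ccontr)
      assume ne: "F (i + int k + 1) \<noteq> F a"
      have "i + int k + 1 \<noteq> a" using ne by auto
      then have lt: "i + int k + 1 < a" using ai by simp
      have l1: "F a < F (i + int k + 1)" using F_decN[OF V _ lt a(2)] i by simp
      have l2: "F (i + int k + 1) < F (i + int k)" using F_decN[OF V, of "i + int k" "i + int k + 1"] i lt a by simp
      have "F j < F (i + int k + 1)" "F (i + int k + 1) < F i" using l1 l2 a Fb1 IH cv[of k] by auto
      then obtain b' where b': "1 \<le> b'" "F (i + int k + 1) = F b'" using M2[of "i + int k + 1"] i lt a by auto
      have "b' < b" using F_ltP_iff[OF V b(1) b'(1)] l1 a b' by simp
      moreover have "F b' < c k" using l2 b' IH by simp
      ultimately show False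
      proof (cases "k = 0")
        case True
        then have "F b' < F i" using \<open>F b' < c k\<close> by (simp add: c_def)
        then have "\<not> b' < j0" using below[OF b'(1)] by (meson not_less_iff_gr_or_eq)
        then show False using \<open>b' < b\<close> True unfolding b_def by simp
      next
        case False
        then have "F b' < F (j0 + int k - 1)" using \<open>F b' < c k\<close> by (simp add: c_def)
        then have "j0 + int k - 1 < b'" using F_ltP_iff[OF V b'(1), of "j0 + int k - 1"] j0 False by simp
        then show False using \<open>b' < b\<close> unfolding b_def by simp
      qed
    qed
    have "c (Suc k) = F b" unfolding c_def b_def by simp
    moreover have e2: "i + int (Suc k) = i + int k + 1" by simp
    moreover have "i + int k + 1 \<le> -1" using ai a by simp
    ultimately show ?case unfolding e2 eq using a by simp
  qed
  have C1: "i + int r \<le> -1" using E by simp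
  have C2: "F (j0 + int s) < F (i + int s)" if "s \<le> r" for s
    using E[OF that] cgt[of s] by simp
  have C3: "F (j + 1) < F (i + int r)"
    using C2[of r] F_decP[OF V, of j "j+1"] j jr by simp
  have C4: "F (i + int r + 1) < F j" if ir1: "i + int r + 1 \<le> -1"
  proof (rule ccontr)
    assume "\<not> F (i + int r + 1) < F j"
    moreover have "F (i + int r + 1) \<noteq> F j"
    proof
      assume "F (i + int r + 1) = F j"
      moreover have "i + int r + 1 \<in> NS" using that i by simp
      ultimately show False using wN by (metis imageI)
    qed
    ultimately have g: "F j < F (i + int r + 1)" by simp
    have l2: "F (i + int r + 1) < F (i + int r)" using F_decN[OF V, of "i + int r" "i + int r + 1"] i that by simp
    then have "F (i + int r + 1) < F i" using E[of r] cv[of r] by simp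
    moreover have "- int m \<le> i + int r + 1" using i by simp
    ultimately have "F (i + int r + 1) \<in> F ` PS" using M2[of "i + int r + 1"] ir1 g by blast
    then obtain b' where b': "1 \<le> b'" "F (i + int r + 1) = F b'" by auto
    have "b' < j" using F_ltP_iff[OF V j b'(1)] g b' by simp
    have "F b' < c r" using l2 b' E[of r] by simp
    show False
    proof (cases "r = 0")
      case True
      then have "F b' < F i" using \<open>F b' < c r\<close> by (simp add: c_def)
      then have "\<not> b' < j0" using below[OF b'(1)] by (meson not_less_iff_gr_or_eq)
      then show False using \<open>b' < j\<close> True jr by simp
    next
      case False
      then have "F b' < F (j0 + int r - 1)" using \<open>F b' < c r\<close> by (simp add: c_def)
      then have "j0 + int r - 1 < b'" using F_ltP_iff[OF V b'(1), of "j0 + int r - 1"] j0 False by simp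
      then show False using \<open>b' < j\<close> jr by simp
    qed
  qed
  have C5: "F i < F (j0 - 1)" if "2 \<le> j0" using below[of "j0 - 1"] that by simp
  show ?thesis by (rule constr[OF i(1) j0(1) jr C1 C2 C3 C4 C5])
qed

end

theorem theorem6p4:
  fixes m :: nat and lam :: "int \<Rightarrow> int"
  assumes "lam \<in> Xplus_red m"
  shows "J_atyp_degree m lam = atyp_degree m (natural m lam) \<and>
         (J_typical m lam \<longleftrightarrow> typical m (natural m lam))"
proof -
  interpret valid m lam using assms by (rule valid.intro)
  have 1: "J_atyp_degree m lam = atyp_degree m (natural m lam)"
    using part1 atyp_eq by simp
  have "typical m (natural m lam) \<longleftrightarrow> AT = {}"
    unfolding typical_def atyp_eq using AT_fin by simp
  moreover have "J_typical m lam \<longleftrightarrow> AT = {}"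
    using typ_dir atyp_dir by blast
  ultimately show ?thesis using 1 by simp
qed

end
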